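(* Let $d\ge2$, $1\le p\le\infty$, let $B$ be a magnetic field with bounded derivatives of all orders and $A$ its transversal gauge potential. Let $v\in C^\infty_{\mathrm{pol}}(\mathbb{R}^d,\mathbb{R})$ and $A'(y):=A(y)+\nabla v(y)$ (so $dA'=dA$). Then $M^p_{A'}(\mathbb{R}^d)\simeq M^p_A(\mathbb{R}^d)$ isometrically.
   Context: $C^\infty_{\mathrm{pol}}(\mathbb{R}^d,\mathbb{R})$ denotes real smooth functions all of whose derivatives grow at most polynomially. $B=(B_{jk})$ smooth real skew-symmetric closed 2-form with $\sup|\partial^\alpha B_{jk}|\le C_\alpha$; $A_j(y)=-\sum_k\int_0^1sy_kB_{jk}(sy)\,ds$. For a vector potential $\mathcal{A}\in\{A,A'\}$: $\varphi^{\mathcal{A}}(y,x):=\int_{\Gamma_{x,y}}\mathcal{A}=(y-x)\cdot\int_0^1\mathcal{A}((1-s)x+sy)\,ds$; $g(y)=(2\pi)^{-d/2}\pi^{-d/4}e^{-|y|^2/2}$; $\mathcal{T}^{\mathcal{A}}u(x,\xi):=\int e^{-i\xi\cdot(y-x)}g(y-x)e^{-i\varphi^{\mathcal{A}}(y,x)}u(y)\,dy$; $M^p_{\mathcal{A}}(\mathbb{R}^d):=\{u\in\mathcal{S}':\|\mathcal{T}^{\mathcal{A}}u\|_{L^p(\mathbb{R}^{2d})}<\infty\}$ with norm $\|\mathcal{T}^{\mathcal{A}}u\|_{L^p}$ (for $p=\infty$ the closure of $\mathcal{S}$ in that norm). *)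

theory Defs
  imports "HOL-Analysis.Analysis" "HOL-Probability.Essential_Supremum"
begin

definition dpart :: "'n::finite \<Rightarrow> (real^'n \<Rightarrow> 'b::real_normed_vector) \<Rightarrow> real^'n \<Rightarrow> 'b" where
  "dpart i f x = frechet_derivative f (at x) (axis i 1)"

text \<open>Iterated partial derivative; a list of coordinate indices encodes a multi-index.\<close>
definition diffs :: "'n::finite list \<Rightarrow> (real^'n \<Rightarrow> 'b::real_normed_vector) \<Rightarrow> real^'n \<Rightarrow> 'b" where
  "diffs is f = foldr dpart is f"

definition smooth :: "(real^'n::finite \<Rightarrow> 'b::real_normed_vector) \<Rightarrow> bool" where
  "smooth f \<longleftrightarrow> (\<forall>is x. diffs is f differentiable (at x))"

definition smooth_bdd :: "(real^'n::finite \<Rightarrow> 'b::real_normed_vector) \<Rightarrow> bool" where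
  "smooth_bdd f \<longleftrightarrow> smooth f \<and> (\<forall>is. \<exists>C. \<forall>x. norm (diffs is f x) \<le> C)"

definition Cinf_pol :: "(real^'n::finite \<Rightarrow> real) \<Rightarrow> bool" where
  "Cinf_pol f \<longleftrightarrow> smooth f \<and> (\<forall>is. \<exists>C N. \<forall>x. \<bar>diffs is f x\<bar> \<le> C * (1 + norm x) ^ N)"

definition grad :: "(real^'n::finite \<Rightarrow> real) \<Rightarrow> real^'n \<Rightarrow> real^'n" where
  "grad v y = (\<chi> j. dpart j v y)"

definition Schwartz :: "(real^'n::finite \<Rightarrow> complex) set" where
  "Schwartz = {f. smooth f \<and> (\<forall>is k. \<exists>C. \<forall>x. (1 + norm x) ^ k * norm (diffs is f x) \<le> C)}"

text \<open>Tempered distributions: complex-linear functionals on the Schwartz space that are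
  continuous for the Schwartz topology (bounded by finitely many seminorms); they are
  normalised to vanish outside the Schwartz space so that each distribution has a unique
  representative.\<close>
definition tempered :: "((real^'n::finite \<Rightarrow> complex) \<Rightarrow> complex) \<Rightarrow> bool" where
  "tempered u \<longleftrightarrow>
     (\<forall>\<phi>. \<phi> \<notin> Schwartz \<longrightarrow> u \<phi> = 0) \<and>
     (\<forall>\<phi>\<in>Schwartz. \<forall>\<psi>\<in>Schwartz. \<forall>a b. u (\<lambda>y. a * \<phi> y + b * \<psi> y) = a * u \<phi> + b * u \<psi>) \<and>
     (\<exists>C N. \<forall>\<phi>\<in>Schwartz. \<forall>M.
        (\<forall>x k is. k \<le> N \<and> length is \<le> N \<longrightarrow> (1 + norm x) ^ k * norm (diffs is \<phi> x) \<le> M)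
        \<longrightarrow> norm (u \<phi>) \<le> C * M)"

definition emb :: "(real^'n::finite \<Rightarrow> complex) \<Rightarrow> ((real^'n \<Rightarrow> complex) \<Rightarrow> complex)" where
  "emb f = (\<lambda>\<phi>. if \<phi> \<in> Schwartz then integral\<^sup>L lborel (\<lambda>y. f y * \<phi> y) else 0)"

definition magnetic_field :: "('n::finite \<Rightarrow> 'n \<Rightarrow> real^'n \<Rightarrow> real) \<Rightarrow> bool" where
  "magnetic_field B \<longleftrightarrow>
     (\<forall>j k. smooth_bdd (B j k)) \<and>
     (\<forall>j k y. B j k y = - B k j y) \<and>
     (\<forall>i j k y. dpart i (B j k) y + dpart j (B k i) y + dpart k (B i j) y = 0)"

definition transversal_gauge :: "('n::finite \<Rightarrow> 'n \<Rightarrow> real^'n \<Rightarrow> real) \<Rightarrow> real^'n \<Rightarrow> real^'n" where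
  "transversal_gauge B y = (\<chi> j. - (\<Sum>k\<in>UNIV. integral {0..1} (\<lambda>s. s * y $ k * B j k (s *\<^sub>R y))))"

definition mag_phase :: "(real^'n::finite \<Rightarrow> real^'n) \<Rightarrow> real^'n \<Rightarrow> real^'n \<Rightarrow> real" where
  "mag_phase \<A> y x = (y - x) \<bullet> integral {0..1} (\<lambda>s. \<A> ((1 - s) *\<^sub>R x + s *\<^sub>R y))"

definition gwin :: "real^'n::finite \<Rightarrow> real" where
  "gwin y = (2 * pi) powr (- real CARD('n) / 2) * pi powr (- real CARD('n) / 4) * exp (- (norm y)\<^sup>2 / 2)"

definition mag_window :: "(real^'n::finite \<Rightarrow> real^'n) \<Rightarrow> real^'n \<Rightarrow> real^'n \<Rightarrow> real^'n \<Rightarrow> complex" where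
  "mag_window \<A> x \<xi> = (\<lambda>y. cis (- (\<xi> \<bullet> (y - x))) * complex_of_real (gwin (y - x)) * cis (- mag_phase \<A> y x))"

definition mag_stft :: "(real^'n::finite \<Rightarrow> real^'n) \<Rightarrow> ((real^'n \<Rightarrow> complex) \<Rightarrow> complex) \<Rightarrow> (real^'n) \<times> (real^'n) \<Rightarrow> complex" where
  "mag_stft \<A> u = (\<lambda>(x, \<xi>). u (mag_window \<A> x \<xi>))"

definition Lp_norm :: "ennreal \<Rightarrow> ('a::euclidean_space \<Rightarrow> complex) \<Rightarrow> ereal" where
  "Lp_norm p f = (if p = \<infinity> then esssup lborel (\<lambda>z. ereal (norm (f z)))
     else (let I = (\<integral>\<^sup>+ z. ennreal (norm (f z) powr enn2real p) \<partial>lborel)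
           in if I = \<infinity> then \<infinity> else ereal (enn2real I powr (1 / enn2real p))))"

definition Mnorm :: "ennreal \<Rightarrow> (real^'n::finite \<Rightarrow> real^'n) \<Rightarrow> ((real^'n \<Rightarrow> complex) \<Rightarrow> complex) \<Rightarrow> ereal" where
  "Mnorm p \<A> u = Lp_norm p (mag_stft \<A> u)"

definition Mspace :: "ennreal \<Rightarrow> (real^'n::finite \<Rightarrow> real^'n) \<Rightarrow> ((real^'n \<Rightarrow> complex) \<Rightarrow> complex) set" where
  "Mspace p \<A> =
     (if p = \<infinity> then
        {u. tempered u \<and> mag_stft \<A> u \<in> borel_measurable lborel \<and> Mnorm p \<A> u < \<infinity> \<and>
            (\<exists>f. (\<forall>n. f n \<in> Schwartz) \<and>
                 ((\<lambda>n. Mnorm p \<A> (\<lambda>\<phi>. u \<phi> - emb (f n) \<phi>)) \<longlongrightarrow> 0) sequentially)}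
      else {u. tempered u \<and> mag_stft \<A> u \<in> borel_measurable lborel \<and> Mnorm p \<A> u < \<infinity>})"

end

theory Submission
  imports Defs
begin


lemma diffs_Nil[simp]: "diffs [] f = f" by (simp add: diffs_def)
lemma diffs_Cons[simp]: "diffs (i#is) f = dpart i (diffs is f)" by (simp add: diffs_def)
lemma diffs_append: "diffs (is @ js) f = diffs is (diffs js f)" by (simp add: diffs_def)

lemma dpart_has: "(f has_derivative D) (at x) \<Longrightarrow> dpart i f x = D (axis i 1)"
  unfolding dpart_def using frechet_derivative_at by metis

lemma smooth_diff: "smooth f \<Longrightarrow> f differentiable at x"
  unfolding smooth_def by (metis diffs_Nil)

lemma smooth_diffs: "smooth f \<Longrightarrow> smooth (diffs js f)"
  unfolding smooth_def by (metis diffs_append)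

lemma smooth_dpart: "smooth f \<Longrightarrow> smooth (dpart i f)"
  using smooth_diffs[of f "[i]"] by simp

lemma dpart_add:
  fixes f g :: "real^'n::finite \<Rightarrow> 'b::real_normed_vector"
  assumes "f differentiable at x" "g differentiable at x"
  shows "dpart i (\<lambda>x. f x + g x) x = dpart i f x + dpart i g x"
proof -
  obtain D E where D: "(f has_derivative D) (at x)" and E: "(g has_derivative E) (at x)"
    using assms differentiable_def by blast
  have "((\<lambda>x. f x + g x) has_derivative (\<lambda>h. D h + E h)) (at x)"
    using D E by (rule has_derivative_add)
  from dpart_has[OF this, of i] show ?thesis by (simp add: dpart_has[OF D] dpart_has[OF E])
qed

lemma dpart_mult:
  fixes f g :: "real^'n::finite \<Rightarrow> 'b::real_normed_algebra"
  assumes "f differentiable at x" "g differentiable at x"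
  shows "dpart i (\<lambda>x. f x * g x) x = f x * dpart i g x + dpart i f x * g x"
proof -
  obtain D E where D: "(f has_derivative D) (at x)" and E: "(g has_derivative E) (at x)"
    using assms differentiable_def by blast
  have "((\<lambda>x. f x * g x) has_derivative (\<lambda>h. f x * E h + D h * g x)) (at x)"
    using D E by (rule has_derivative_mult)
  from dpart_has[OF this, of i] show ?thesis by (simp add: dpart_has[OF D] dpart_has[OF E])
qed

lemma dpart_const:
  fixes x :: "real^'n::finite" and c :: "'b::real_normed_vector"
  shows "dpart i (\<lambda>x. c) x = 0"
proof -
  have "((\<lambda>x::real^'n. c) has_derivative (\<lambda>h. 0)) (at x)" by (rule has_derivative_const)
  from dpart_has[OF this, of i] show ?thesis by simp
qed

lemma dpart_of_real:
  fixes g :: "real^'n::finite \<Rightarrow> real"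
  assumes "g differentiable at x"
  shows "dpart i (\<lambda>x. (of_real (g x) :: complex)) x = of_real (dpart i g x)"
proof -
  obtain D where D: "(g has_derivative D) (at x)" using assms differentiable_def by blast
  have "((\<lambda>x. (of_real (g x) :: complex)) has_derivative (\<lambda>h. of_real (D h))) (at x)"
    using bounded_linear.has_derivative[OF bounded_linear_of_real D] .
  from dpart_has[OF this, of i] show ?thesis by (simp add: dpart_has[OF D])
qed

lemma dpart_cis:
  fixes g :: "real^'n::finite \<Rightarrow> real"
  assumes "g differentiable at x"
  shows "dpart i (\<lambda>x. cis (s * g x)) x = cis (s * g x) * (\<i> * of_real s * of_real (dpart i g x))"
proof -
  obtain D where D: "(g has_derivative D) (at x)" using assms differentiable_def by blast
  have D2: "((\<lambda>x. s * g x) has_derivative (\<lambda>h. s * D h)) (at x)"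
    using D by (intro derivative_intros)
  have "((\<lambda>x. cis (s * g x)) has_derivative (\<lambda>h. (s * D h) *\<^sub>R (\<i> * cis (s * g x)))) (at x)"
    using has_derivative_cis[OF D2] .
  then have "dpart i (\<lambda>x. cis (s * g x)) x = (s * D (axis i 1)) *\<^sub>R (\<i> * cis (s * g x))"
    by (rule dpart_has)
  then show ?thesis using dpart_has[OF D] by (simp add: scaleR_conv_of_real mult_ac)
qed

lemma cis_differentiable:
  fixes g :: "real^'n::finite \<Rightarrow> real"
  assumes "g differentiable at x"
  shows "(\<lambda>x. cis (s * g x)) differentiable at x"
proof -
  obtain D where D: "(g has_derivative D) (at x)" using assms differentiable_def by blast
  have D2: "((\<lambda>x. s * g x) has_derivative (\<lambda>h. s * D h)) (at x)"
    using D by (intro derivative_intros)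
  show ?thesis unfolding differentiable_def using has_derivative_cis[OF D2] by blast
qed

lemma diffs_add:
  fixes f g :: "real^'n::finite \<Rightarrow> 'b::real_normed_vector"
  assumes "smooth f" "smooth g"
  shows "diffs is (\<lambda>x. f x + g x) = (\<lambda>x. diffs is f x + diffs is g x)"
proof (induction "is")
  case Nil then show ?case by simp
next
  case (Cons i js)
  have "diffs (i#js) (\<lambda>x. f x + g x) = dpart i (\<lambda>x. diffs js f x + diffs js g x)"
    using Cons by simp
  also have "\<dots> = (\<lambda>x. diffs (i#js) f x + diffs (i#js) g x)"
    by (rule ext, simp, rule dpart_add) (rule smooth_diff[OF smooth_diffs], fact)+
  finally show ?case .
qed

lemma smooth_add:
  fixes f g :: "real^'n::finite \<Rightarrow> 'b::real_normed_vector"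
  assumes "smooth f" "smooth g"
  shows "smooth (\<lambda>x. f x + g x)"
  using assms unfolding smooth_def diffs_add[OF assms] by auto

lemma diffs_const: "diffs is (\<lambda>x. c) = (if is = [] then (\<lambda>x. c) else (\<lambda>x. 0))"
proof (induction "is")
  case Nil then show ?case by simp
next
  case (Cons i js)
  have "dpart i (diffs js (\<lambda>x. c)) = (\<lambda>x. 0)"
    unfolding Cons by (cases "js = []") (simp_all add: fun_eq_iff dpart_const)
  then show ?case by simp
qed

lemma smooth_const: "smooth (\<lambda>x. c)"
  unfolding smooth_def diffs_const by auto

lemma of_real_differentiable:
  fixes g :: "real^'n::finite \<Rightarrow> real"
  assumes "g differentiable at x"
  shows "(\<lambda>x. (of_real (g x) :: complex)) differentiable at x"
proof -
  obtain D where D: "(g has_derivative D) (at x)" using assms differentiable_def by blast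
  show ?thesis unfolding differentiable_def using bounded_linear.has_derivative[OF bounded_linear_of_real D] by blast
qed

lemma diffs_of_real:
  fixes g :: "real^'n::finite \<Rightarrow> real"
  assumes "smooth g"
  shows "diffs is (\<lambda>x. (of_real (g x) :: complex)) = (\<lambda>x. of_real (diffs is g x))"
proof (induction "is")
  case Nil then show ?case by simp
next
  case (Cons i js)
  have "dpart i (\<lambda>x. (of_real (diffs js g x) :: complex)) x = of_real (dpart i (diffs js g) x)" for x
    by (rule dpart_of_real) (rule smooth_diff[OF smooth_diffs[OF assms]])
  then show ?case using Cons by simp
qed

lemma smooth_of_real:
  fixes g :: "real^'n::finite \<Rightarrow> real"
  assumes "smooth g"
  shows "smooth (\<lambda>x. (of_real (g x) :: complex))"
  unfolding smooth_def diffs_of_real[OF assms]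
  using assms[unfolded smooth_def] of_real_differentiable by blast



fun leib :: "'a list \<Rightarrow> ('a list \<times> 'a list) list" where
  "leib [] = [([],[])]"
| "leib (i#is) = concat (map (\<lambda>t. [(i # fst t, snd t), (fst t, i # snd t)]) (leib is))"

lemma length_concat2: "length (concat (map (\<lambda>t. [a t, b t]) xs)) = 2 * length xs"
  by (induction xs) simp_all

lemma length_leib: "length (leib is) = 2 ^ length is"
  by (induction "is") (simp_all add: length_concat2)

lemma leib_len: "t \<in> set (leib is) \<Longrightarrow> length (fst t) + length (snd t) = length is"
  by (induction "is" arbitrary: t) auto

lemma sum_list_concat2:
  "sum_list (map Q (concat (map (\<lambda>t. [a t, b t]) xs))) = sum_list (map (\<lambda>t. Q (a t) + Q (b t)) xs)"
  by (induction xs) (simp_all add: add.assoc)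

lemma differentiable_sum_list:
  fixes F :: "'c \<Rightarrow> real^'n::finite \<Rightarrow> 'b::real_normed_vector"
  assumes "\<forall>t\<in>set ts. F t differentiable at x"
  shows "(\<lambda>x. sum_list (map (\<lambda>t. F t x) ts)) differentiable at x"
  using assms by (induction ts) simp_all

lemma dpart_sum_list:
  fixes F :: "'c \<Rightarrow> real^'n::finite \<Rightarrow> 'b::real_normed_vector"
  assumes "\<forall>t\<in>set ts. F t differentiable at x"
  shows "dpart i (\<lambda>x. sum_list (map (\<lambda>t. F t x) ts)) x = sum_list (map (\<lambda>t. dpart i (F t) x) ts)"
  using assms
proof (induction ts)
  case Nil then show ?case by (simp add: dpart_const)
next
  case (Cons t ts)
  have "dpart i (\<lambda>x. F t x + sum_list (map (\<lambda>t. F t x) ts)) x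
      = dpart i (F t) x + dpart i (\<lambda>x. sum_list (map (\<lambda>t. F t x) ts)) x"
    using Cons.prems differentiable_sum_list[of ts F x]
    by (intro dpart_add) auto
  then show ?case using Cons by simp
qed

lemma diffs_mult:
  fixes f g :: "real^'n::finite \<Rightarrow> 'b::real_normed_algebra"
  assumes f: "smooth f" and g: "smooth g"
  shows "diffs is (\<lambda>x. f x * g x) = (\<lambda>x. sum_list (map (\<lambda>t. diffs (fst t) f x * diffs (snd t) g x) (leib is)))"
proof (induction "is")
  case Nil then show ?case by simp
next
  case (Cons i js)
  show ?case
  proof (rule ext)
    fix x
    have d: "\<forall>t\<in>set (leib js). (\<lambda>x. diffs (fst t) f x * diffs (snd t) g x) differentiable at x"
      using smooth_diff[OF smooth_diffs[OF f]] smooth_diff[OF smooth_diffs[OF g]] by simp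
    have "diffs (i#js) (\<lambda>x. f x * g x) x
       = dpart i (\<lambda>x. sum_list (map (\<lambda>t. diffs (fst t) f x * diffs (snd t) g x) (leib js))) x"
      using Cons by simp
    also have "\<dots> = sum_list (map (\<lambda>t. dpart i (\<lambda>x. diffs (fst t) f x * diffs (snd t) g x) x) (leib js))"
      using d by (rule dpart_sum_list)
    also have "\<dots> = sum_list (map (\<lambda>t. diffs (i # fst t) f x * diffs (snd t) g x + diffs (fst t) f x * diffs (i # snd t) g x) (leib js))"
      apply (rule arg_cong[where f=sum_list], rule map_cong, rule refl)
      apply (subst dpart_mult)
        apply (rule smooth_diff[OF smooth_diffs[OF f]])
       apply (rule smooth_diff[OF smooth_diffs[OF g]])
      apply (simp add: add.commute)
      done
    also have "\<dots> = sum_list (map (\<lambda>t. diffs (fst t) f x * diffs (snd t) g x) (leib (i#js)))"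
      by (simp only: leib.simps sum_list_concat2 fst_conv snd_conv)
    finally show "diffs (i#js) (\<lambda>x. f x * g x) x = sum_list (map (\<lambda>t. diffs (fst t) f x * diffs (snd t) g x) (leib (i#js)))" .
  qed
qed

lemma smooth_mult:
  fixes f g :: "real^'n::finite \<Rightarrow> 'b::real_normed_algebra"
  assumes f: "smooth f" and g: "smooth g"
  shows "smooth (\<lambda>x. f x * g x)"
  unfolding smooth_def diffs_mult[OF f g]
  using smooth_diff[OF smooth_diffs[OF f]] smooth_diff[OF smooth_diffs[OF g]]
  by (intro allI differentiable_sum_list) simp

definition pb :: "(real^'n::finite \<Rightarrow> real) \<Rightarrow> bool" where
  "pb F \<longleftrightarrow> (\<exists>C N. \<forall>x. F x \<le> C * (1 + norm x) ^ N)"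

lemma pbE:
  assumes "pb F"
  obtains C N where "C \<ge> 0" "\<And>x. F x \<le> C * (1 + norm x) ^ N"
proof -
  obtain C N where H: "\<And>x. F x \<le> C * (1 + norm x) ^ N" using assms unfolding pb_def by blast
  have "F x \<le> max C 0 * (1 + norm x) ^ N" for x
  proof -
    have "C * (1 + norm x) ^ N \<le> max C 0 * (1 + norm x) ^ N"
      by (intro mult_right_mono) auto
    then show ?thesis using H[of x] by linarith
  qed
  then show ?thesis using that[of "max C 0" N] by auto
qed

lemma pow_le_pow_add: "(1 + norm (x::real^'n::finite)) ^ N \<le> (1 + norm x) ^ (N + M)"
  by (rule power_increasing) auto

lemma pb_add: assumes "pb F" "pb G" shows "pb (\<lambda>x. F x + G x)"
proof -
  obtain C1 N1 where C1: "C1 \<ge> 0" "\<And>x. F x \<le> C1 * (1 + norm x) ^ N1" using pbE[OF assms(1)] by blast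
  obtain C2 N2 where C2: "C2 \<ge> 0" "\<And>x. G x \<le> C2 * (1 + norm x) ^ N2" using pbE[OF assms(2)] by blast
  have "F x + G x \<le> (C1 + C2) * (1 + norm x) ^ (N1 + N2)" for x
  proof -
    have "C1 * (1 + norm x) ^ N1 \<le> C1 * (1 + norm x) ^ (N1 + N2)"
      using C1(1) pow_le_pow_add[of x N1 N2] by (simp add: mult_left_mono)
    moreover have "C2 * (1 + norm x) ^ N2 \<le> C2 * (1 + norm x) ^ (N1 + N2)"
      using C2(1) pow_le_pow_add[of x N2 N1] by (simp add: add.commute mult_left_mono)
    ultimately show ?thesis using C1(2)[of x] C2(2)[of x] by (simp add: distrib_right)
  qed
  then show ?thesis unfolding pb_def by blast
qed

lemma pb_mult:
  assumes "pb F" "pb G" "\<And>x. F x \<ge> 0" "\<And>x. G x \<ge> 0"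
  shows "pb (\<lambda>x. F x * G x)"
proof -
  obtain C1 N1 where C1: "C1 \<ge> 0" "\<And>x. F x \<le> C1 * (1 + norm x) ^ N1" using pbE[OF assms(1)] by blast
  obtain C2 N2 where C2: "C2 \<ge> 0" "\<And>x. G x \<le> C2 * (1 + norm x) ^ N2" using pbE[OF assms(2)] by blast
  have "F x * G x \<le> (C1 * C2) * (1 + norm x) ^ (N1 + N2)" for x
  proof -
    have "F x * G x \<le> (C1 * (1 + norm x) ^ N1) * (C2 * (1 + norm x) ^ N2)"
      using C1 C2 assms(3,4) by (intro mult_mono) auto
    then show ?thesis by (simp add: power_add mult_ac)
  qed
  then show ?thesis unfolding pb_def by blast
qed

lemma pb_mono: assumes "pb G" "\<And>x. F x \<le> G x" shows "pb F"
  using assms unfolding pb_def by (meson order_trans)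

lemma pb_const: "pb (\<lambda>x. c)"
  unfolding pb_def by (rule exI[of _ c], rule exI[of _ 0]) simp

lemma pb_sum_list: assumes "\<forall>t\<in>set ts. pb (F t)" shows "pb (\<lambda>x. sum_list (map (\<lambda>t. F t x) ts))"
  using assms by (induction ts) (simp_all add: pb_const pb_add)

lemma norm_sum_list_le: "norm (sum_list (map f xs)) \<le> sum_list (map (\<lambda>t. norm (f t)) xs)"
  by (induction xs) (simp_all add: norm_triangle_le)

definition PolC :: "(real^'n::finite \<Rightarrow> complex) \<Rightarrow> bool" where
  "PolC f \<longleftrightarrow> smooth f \<and> (\<forall>is. pb (\<lambda>x. norm (diffs is f x)))"

lemma PolC_const: "PolC (\<lambda>x. c)"
  unfolding PolC_def diffs_const by (auto simp: smooth_const pb_const)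

lemma PolC_add: assumes "PolC f" "PolC g" shows "PolC (\<lambda>x. f x + g x)"
proof -
  have s: "smooth f" "smooth g" using assms unfolding PolC_def by auto
  show ?thesis unfolding PolC_def diffs_add[OF s]
  proof (intro conjI allI smooth_add[OF s])
    fix "is"
    have "pb (\<lambda>x. norm (diffs is f x) + norm (diffs is g x))"
      using assms unfolding PolC_def by (intro pb_add) auto
    then show "pb (\<lambda>x. norm (diffs is f x + diffs is g x))"
      by (rule pb_mono) (rule norm_triangle_ineq)
  qed
qed

lemma PolC_mult: assumes "PolC f" "PolC g" shows "PolC (\<lambda>x. f x * g x)"
proof -
  have s: "smooth f" "smooth g" using assms unfolding PolC_def by auto
  show ?thesis unfolding PolC_def diffs_mult[OF s]
  proof (intro conjI allI smooth_mult[OF s])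
    fix "is"
    have "pb (\<lambda>x. sum_list (map (\<lambda>t. norm (diffs (fst t) f x) * norm (diffs (snd t) g x)) (leib is)))"
      using assms unfolding PolC_def by (intro pb_sum_list ballI pb_mult) auto
    then show "pb (\<lambda>x. norm (sum_list (map (\<lambda>t. diffs (fst t) f x * diffs (snd t) g x) (leib is))))"
      by (rule pb_mono) (rule order_trans[OF norm_sum_list_le], simp add: norm_mult)
  qed
qed

lemma PolC_dpart: assumes "PolC f" shows "PolC (dpart i f)"
  using assms unfolding PolC_def
  by (metis diffs_append diffs_Cons diffs_Nil append_Cons append_Nil smooth_dpart)

lemma PolC_of_real: assumes "Cinf_pol v" shows "PolC (\<lambda>x. (of_real (v x) :: complex))"
proof -
  have s: "smooth v" using assms unfolding Cinf_pol_def by auto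
  show ?thesis unfolding PolC_def diffs_of_real[OF s]
    using assms smooth_of_real[OF s] unfolding Cinf_pol_def pb_def by simp
qed

lemma cis_diffs:
  assumes v: "Cinf_pol v"
  shows "\<exists>q. PolC q \<and> diffs is (\<lambda>y. cis (s * v y)) = (\<lambda>y. cis (s * v y) * q y)"
proof (induction "is")
  case Nil
  show ?case by (rule exI[of _ "\<lambda>y. 1"]) (simp add: PolC_const)
next
  case (Cons i js)
  obtain q where q: "PolC q" and e: "diffs js (\<lambda>y. cis (s * v y)) = (\<lambda>y. cis (s * v y) * q y)"
    using Cons by blast
  have sv: "smooth v" using v unfolding Cinf_pol_def by auto
  have sq: "smooth q" using q unfolding PolC_def by auto
  define q' where "q' = (\<lambda>y. (\<i> * of_real s * of_real (dpart i v y)) * q y + dpart i q y)"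
  have dv: "dpart i (\<lambda>x. (of_real (v x) :: complex)) = (\<lambda>y. of_real (dpart i v y))"
    by (rule ext, rule dpart_of_real, rule smooth_diff[OF sv])
  have "PolC (\<lambda>y. (of_real (dpart i v y) :: complex))"
    using PolC_dpart[OF PolC_of_real[OF v], of i] unfolding dv .
  then have "PolC q'" unfolding q'_def
    by (intro PolC_add PolC_mult PolC_const PolC_dpart q)
  moreover have "diffs (i#js) (\<lambda>y. cis (s * v y)) = (\<lambda>y. cis (s * v y) * q' y)"
  proof (rule ext)
    fix y
    have "diffs (i#js) (\<lambda>y. cis (s * v y)) y = dpart i (\<lambda>y. cis (s * v y) * q y) y"
      using e by simp
    also have "\<dots> = cis (s * v y) * dpart i q y + dpart i (\<lambda>y. cis (s * v y)) y * q y"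
      by (rule dpart_mult) (rule cis_differentiable[OF smooth_diff[OF sv]], rule smooth_diff[OF sq])
    also have "\<dots> = cis (s * v y) * q' y"
      unfolding q'_def dpart_cis[OF smooth_diff[OF sv]] by (simp add: algebra_simps)
    finally show "diffs (i#js) (\<lambda>y. cis (s * v y)) y = cis (s * v y) * q' y" .
  qed
  ultimately show ?case by blast
qed

lemma PolC_cis: assumes v: "Cinf_pol v" shows "PolC (\<lambda>y. cis (s * v y))"
  unfolding PolC_def
proof (intro conjI allI)
  have sv: "smooth v" using v unfolding Cinf_pol_def by auto
  show "smooth (\<lambda>y. cis (s * v y))" unfolding smooth_def
  proof (intro allI)
    fix "is" x
    obtain q where q: "PolC q" and e: "diffs is (\<lambda>y. cis (s * v y)) = (\<lambda>y. cis (s * v y) * q y)"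
      using cis_diffs[OF v] by blast
    have "smooth q" using q unfolding PolC_def by auto
    then show "diffs is (\<lambda>y. cis (s * v y)) differentiable at x" unfolding e
      by (intro differentiable_mult cis_differentiable smooth_diff sv)
  qed
  fix "is"
  obtain q where q: "PolC q" and e: "diffs is (\<lambda>y. cis (s * v y)) = (\<lambda>y. cis (s * v y) * q y)"
    using cis_diffs[OF v] by blast
  have "pb (\<lambda>x. norm (diffs [] q x))" using q unfolding PolC_def by blast
  then show "pb (\<lambda>x. norm (diffs is (\<lambda>y. cis (s * v y)) x))"
    unfolding e by (simp add: norm_mult)
qed



lemma bsum: "(\<forall>t\<in>set ts. \<exists>c. \<forall>x. F t x \<le> c) \<Longrightarrow> \<exists>c. \<forall>x. sum_list (map (\<lambda>t. F t x) ts) \<le> (c::real)"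
proof (induction ts)
  case Nil then show ?case by auto
next
  case (Cons t ts)
  then obtain c1 c2 where "\<forall>x. F t x \<le> c1" "\<forall>x. sum_list (map (\<lambda>t. F t x) ts) \<le> c2" by auto
  then have "\<forall>x. sum_list (map (\<lambda>t. F t x) (t#ts)) \<le> c1 + c2" by (simp add: add_mono)
  then show ?case by blast
qed

lemma term_bound:
  fixes x :: "real^'n::finite"
  assumes "0 \<le> C" "na \<le> C * (1 + norm x) ^ N" "0 \<le> nb" "0 \<le> na"
  shows "(1 + norm x) ^ k * (na * nb) \<le> C * ((1 + norm x) ^ (k + N) * nb)"
proof -
  have "(1 + norm x) ^ k * (na * nb) \<le> (1 + norm x) ^ k * ((C * (1 + norm x) ^ N) * nb)"
    using assms by (intro mult_left_mono mult_right_mono) auto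
  also have "\<dots> = C * ((1 + norm x) ^ (k + N) * nb)" by (simp add: power_add mult_ac)
  finally show ?thesis .
qed

lemma Schwartz_smooth: "\<phi> \<in> Schwartz \<Longrightarrow> smooth \<phi>" unfolding Schwartz_def by auto

lemma Schwartz_mult:
  fixes m :: "real^'n::finite \<Rightarrow> complex"
  assumes m: "PolC m" and phi: "\<phi> \<in> Schwartz"
  shows "(\<lambda>y. m y * \<phi> y) \<in> Schwartz"
proof -
  have sm: "smooth m" using m unfolding PolC_def by auto
  have sp: "smooth \<phi>" using phi unfolding Schwartz_def by auto
  have "\<exists>C. \<forall>x. (1 + norm x) ^ k * norm (diffs is (\<lambda>y. m y * \<phi> y) x) \<le> C" for "is" k
  proof -
    have "\<exists>c. \<forall>x. sum_list (map (\<lambda>t. (1 + norm x) ^ k * (norm (diffs (fst t) m x) * norm (diffs (snd t) \<phi> x))) (leib is)) \<le> c"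
    proof (rule bsum, intro ballI)
      fix t :: "'n list \<times> 'n list"
      obtain C N where C: "C \<ge> 0" "\<And>x. norm (diffs (fst t) m x) \<le> C * (1 + norm x) ^ N"
        using pbE[of "\<lambda>x. norm (diffs (fst t) m x)"] m unfolding PolC_def by blast
      obtain D where D: "\<forall>x. (1 + norm x) ^ (k + N) * norm (diffs (snd t) \<phi> x) \<le> D"
        using phi unfolding Schwartz_def by blast
      have "(1 + norm x) ^ k * (norm (diffs (fst t) m x) * norm (diffs (snd t) \<phi> x)) \<le> C * D" for x
        using term_bound[OF C(1) C(2)[of x], of "norm (diffs (snd t) \<phi> x)" k] D[rule_format, of x] C(1)
        by (meson mult_left_mono norm_ge_zero order_trans)
      then show "\<exists>c. \<forall>x. (1 + norm x) ^ k * (norm (diffs (fst t) m x) * norm (diffs (snd t) \<phi> x)) \<le> c" by blast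
    qed
    then obtain c where c: "\<And>x. sum_list (map (\<lambda>t. (1 + norm x) ^ k * (norm (diffs (fst t) m x) * norm (diffs (snd t) \<phi> x))) (leib is)) \<le> c"
      by blast
    have "(1 + norm x) ^ k * norm (diffs is (\<lambda>y. m y * \<phi> y) x) \<le> c" for x
    proof -
      have "(1 + norm x) ^ k * norm (diffs is (\<lambda>y. m y * \<phi> y) x)
          \<le> (1 + norm x) ^ k * sum_list (map (\<lambda>t. norm (diffs (fst t) m x) * norm (diffs (snd t) \<phi> x)) (leib is))"
        unfolding diffs_mult[OF sm sp]
        by (rule mult_left_mono, rule order_trans[OF norm_sum_list_le]) (simp_all add: norm_mult)
      also have "\<dots> = sum_list (map (\<lambda>t. (1 + norm x) ^ k * (norm (diffs (fst t) m x) * norm (diffs (snd t) \<phi> x))) (leib is))"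
        by (simp add: sum_list_const_mult)
      finally show ?thesis using c[of x] by linarith
    qed
    then show ?thesis by blast
  qed
  then show ?thesis unfolding Schwartz_def using smooth_mult[OF sm sp] by blast
qed

lemma mult_est:
  fixes m :: "real^'n::finite \<Rightarrow> complex"
  assumes m: "PolC m"
  shows "\<exists>K N'. \<forall>\<phi>\<in>Schwartz. \<forall>M.
     (\<forall>x k is. k \<le> N' \<and> length is \<le> N' \<longrightarrow> (1 + norm x) ^ k * norm (diffs is \<phi> x) \<le> M) \<longrightarrow>
     (\<forall>x k is. k \<le> N \<and> length is \<le> N \<longrightarrow> (1 + norm x) ^ k * norm (diffs is (\<lambda>y. m y * \<phi> y) x) \<le> K * M)"
proof -
  have sm: "smooth m" using m unfolding PolC_def by auto
  have "\<forall>a. \<exists>CN. fst CN \<ge> 0 \<and> (\<forall>x. norm (diffs a m x) \<le> fst CN * (1 + norm x) ^ snd CN)"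
  proof
    fix a
    obtain C N where "C \<ge> 0" "\<And>x. norm (diffs a m x) \<le> C * (1 + norm x) ^ N"
      using pbE[of "\<lambda>x. norm (diffs a m x)"] m unfolding PolC_def by blast
    then show "\<exists>CN. fst CN \<ge> 0 \<and> (\<forall>x. norm (diffs a m x) \<le> fst CN * (1 + norm x) ^ snd CN)"
      by (intro exI[of _ "(C, N)"]) auto
  qed
  then obtain F where F: "\<And>a. fst (F a) \<ge> 0" "\<And>a x. norm (diffs a m x) \<le> fst (F a) * (1 + norm x) ^ snd (F a)"
    by metis
  define L where "L = {a. set a \<subseteq> (UNIV::'n set) \<and> length a \<le> N}"
  have finL: "finite L" unfolding L_def by (rule finite_lists_length_le) simp
  define Cm where "Cm = sum (\<lambda>a. fst (F a)) L"
  define Nm where "Nm = sum (\<lambda>a. snd (F a)) L"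
  have Cm: "a \<in> L \<Longrightarrow> fst (F a) \<le> Cm" for a
    unfolding Cm_def by (rule member_le_sum) (auto simp: F finL)
  have Nm: "a \<in> L \<Longrightarrow> snd (F a) \<le> Nm" for a
    unfolding Nm_def by (rule member_le_sum) (auto simp: finL)
  have Cm0: "0 \<le> Cm" unfolding Cm_def by (rule sum_nonneg) (simp add: F)
  show ?thesis
  proof (intro exI[of _ "2 ^ N * Cm"] exI[of _ "N + Nm"] ballI allI impI)
    fix \<phi> :: "real^'n \<Rightarrow> complex" and M :: real and x :: "real^'n" and k :: nat and "is" :: "'n list"
    assume phi: "\<phi> \<in> Schwartz"
      and H: "\<forall>x k is. k \<le> N + Nm \<and> length is \<le> N + Nm \<longrightarrow> (1 + norm x) ^ k * norm (diffs is \<phi> x) \<le> M"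
      and kis: "k \<le> N \<and> length is \<le> N"
    have sp: "smooth \<phi>" using phi unfolding Schwartz_def by auto
    have M0: "0 \<le> M" proof -
      have "(1 + norm x) ^ 0 * norm (diffs [] \<phi> x) \<le> M" using H[rule_format, of 0 "[]" x] by simp
      then show ?thesis by (metis norm_ge_zero order_trans power_0 mult_1)
    qed
    have tb: "(1 + norm x) ^ k * (norm (diffs (fst t) m x) * norm (diffs (snd t) \<phi> x)) \<le> Cm * M"
      if t: "t \<in> set (leib is)" for t :: "'n list \<times> 'n list"
    proof -
      have len: "length (fst t) + length (snd t) = length is" using leib_len[OF t] .
      then have aL: "fst t \<in> L" unfolding L_def using kis by auto
      have "(1 + norm x) ^ k * (norm (diffs (fst t) m x) * norm (diffs (snd t) \<phi> x))
          \<le> fst (F (fst t)) * ((1 + norm x) ^ (k + snd (F (fst t))) * norm (diffs (snd t) \<phi> x))"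
        by (rule term_bound[OF F(1) F(2)]) auto
      also have "\<dots> \<le> fst (F (fst t)) * M"
        apply (rule mult_left_mono[OF _ F(1)])
        apply (rule H[rule_format])
        using Nm[OF aL] kis len by auto
      also have "\<dots> \<le> Cm * M" using Cm[OF aL] M0 by (rule mult_right_mono)
      finally show ?thesis .
    qed
    have "(1 + norm x) ^ k * norm (diffs is (\<lambda>y. m y * \<phi> y) x)
        \<le> (1 + norm x) ^ k * sum_list (map (\<lambda>t. norm (diffs (fst t) m x) * norm (diffs (snd t) \<phi> x)) (leib is))"
      unfolding diffs_mult[OF sm sp]
      by (rule mult_left_mono, rule order_trans[OF norm_sum_list_le]) (simp_all add: norm_mult)
    also have "\<dots> = sum_list (map (\<lambda>t. (1 + norm x) ^ k * (norm (diffs (fst t) m x) * norm (diffs (snd t) \<phi> x))) (leib is))"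
      by (simp add: sum_list_const_mult)
    also have "\<dots> \<le> sum_list (map (\<lambda>t. Cm * M) (leib is))"
      by (rule sum_list_mono) (rule tb)
    also have "\<dots> = 2 ^ length is * (Cm * M)" by (simp add: sum_list_triv length_leib)
    also have "\<dots> \<le> 2 ^ N * (Cm * M)"
      using kis Cm0 M0 by (intro mult_right_mono power_increasing) auto
    finally show "(1 + norm x) ^ k * norm (diffs is (\<lambda>y. m y * \<phi> y) x) \<le> 2 ^ N * Cm * M"
      by (simp add: mult_ac)
  qed
qed



definition Phi :: "(real^'n::finite \<Rightarrow> complex) \<Rightarrow> ((real^'n \<Rightarrow> complex) \<Rightarrow> complex) \<Rightarrow> ((real^'n \<Rightarrow> complex) \<Rightarrow> complex)" where
  "Phi m u = (\<lambda>\<phi>. u (\<lambda>y. m y * \<phi> y))"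

definition hom :: "((real^'n::finite \<Rightarrow> complex) \<Rightarrow> complex) \<Rightarrow> bool" where
  "hom w \<longleftrightarrow> (\<forall>c \<phi>. w (\<lambda>y. c * \<phi> y) = c * w \<phi>)"

lemma Schwartz_inv:
  fixes m m' :: "real^'n::finite \<Rightarrow> complex"
  assumes "PolC m'" "\<forall>y. m' y * m y = 1" "(\<lambda>y. m y * \<phi> y) \<in> Schwartz"
  shows "\<phi> \<in> Schwartz"
proof -
  have "(\<lambda>y. m' y * (m y * \<phi> y)) \<in> Schwartz" using Schwartz_mult[OF assms(1,3)] .
  also have "(\<lambda>y. m' y * (m y * \<phi> y)) = \<phi>" using assms(2) by (simp add: mult.assoc[symmetric])
  finally show ?thesis .
qed

lemma Schwartz_mult_iff:
  fixes m m' :: "real^'n::finite \<Rightarrow> complex"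
  assumes "PolC m" "PolC m'" "\<forall>y. m' y * m y = 1"
  shows "(\<lambda>y. m y * \<phi> y) \<in> Schwartz \<longleftrightarrow> \<phi> \<in> Schwartz"
  using Schwartz_inv[OF assms(2,3)] Schwartz_mult[OF assms(1)] by blast

lemma Schwartz_scale_iff:
  fixes c :: complex
  assumes "c \<noteq> 0"
  shows "(\<lambda>y. c * \<phi> y) \<in> Schwartz \<longleftrightarrow> \<phi> \<in> Schwartz"
  by (rule Schwartz_mult_iff[of "\<lambda>y. c" "\<lambda>y. 1 / c"]) (use assms in \<open>auto simp: PolC_const\<close>)

lemma tempered_Phi:
  fixes m m' :: "real^'n::finite \<Rightarrow> complex"
  assumes m: "PolC m" and m': "PolC m'" and inv: "\<forall>y. m' y * m y = 1" and u: "tempered u"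
  shows "tempered (Phi m u)"
proof -
  have u1: "\<And>\<phi>. \<phi> \<notin> Schwartz \<Longrightarrow> u \<phi> = 0" using u unfolding tempered_def by blast
  have u2: "\<And>\<phi> \<psi> a b. \<phi> \<in> Schwartz \<Longrightarrow> \<psi> \<in> Schwartz \<Longrightarrow> u (\<lambda>y. a * \<phi> y + b * \<psi> y) = a * u \<phi> + b * u \<psi>"
    using u unfolding tempered_def by blast
  have "\<exists>C N. \<forall>\<phi>\<in>Schwartz. \<forall>M.
        (\<forall>x k is. k \<le> N \<and> length is \<le> N \<longrightarrow> (1 + norm x) ^ k * norm (diffs is \<phi> x) \<le> M)
        \<longrightarrow> norm (u \<phi>) \<le> C * M"
    using u unfolding tempered_def by (elim conjE)
  then obtain C N where u3: "\<forall>\<phi>\<in>Schwartz. \<forall>M.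
        (\<forall>x k is. k \<le> N \<and> length is \<le> N \<longrightarrow> (1 + norm x) ^ k * norm (diffs is \<phi> x) \<le> M)
        \<longrightarrow> norm (u \<phi>) \<le> C * M"
    by (elim exE)
  obtain K N' where E: "\<forall>\<phi>\<in>Schwartz. \<forall>M.
     (\<forall>x k is. k \<le> N' \<and> length is \<le> N' \<longrightarrow> (1 + norm x) ^ k * norm (diffs is \<phi> x) \<le> M) \<longrightarrow>
     (\<forall>x k is. k \<le> N \<and> length is \<le> N \<longrightarrow> (1 + norm x) ^ k * norm (diffs is (\<lambda>y. m y * \<phi> y) x) \<le> K * M)"
    using mult_est[OF m, of N] by (elim exE)
  have iff: "\<And>\<phi>. (\<lambda>y. m y * \<phi> y) \<in> Schwartz \<longleftrightarrow> \<phi> \<in> Schwartz"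
    by (rule Schwartz_mult_iff[OF m m' inv])
  show ?thesis unfolding tempered_def Phi_def
  proof (intro conjI allI impI ballI)
    fix \<phi> :: "real^'n \<Rightarrow> complex" assume "\<phi> \<notin> Schwartz"
    then show "u (\<lambda>y. m y * \<phi> y) = 0" using u1 iff by blast
  next
    fix \<phi> \<psi> :: "real^'n \<Rightarrow> complex" and a b
    assume "\<phi> \<in> Schwartz" "\<psi> \<in> Schwartz"
    then have "u (\<lambda>y. a * (m y * \<phi> y) + b * (m y * \<psi> y)) = a * u (\<lambda>y. m y * \<phi> y) + b * u (\<lambda>y. m y * \<psi> y)"
      using iff by (intro u2) auto
    moreover have "(\<lambda>y. a * (m y * \<phi> y) + b * (m y * \<psi> y)) = (\<lambda>y. m y * (a * \<phi> y + b * \<psi> y))"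
      by (simp add: algebra_simps)
    ultimately show "u (\<lambda>y. m y * (a * \<phi> y + b * \<psi> y)) = a * u (\<lambda>y. m y * \<phi> y) + b * u (\<lambda>y. m y * \<psi> y)"
      by simp
  next
    show "\<exists>C N. \<forall>\<phi>\<in>Schwartz. \<forall>M. (\<forall>x k is. k \<le> N \<and> length is \<le> N \<longrightarrow> (1 + norm x) ^ k * norm (diffs is \<phi> x) \<le> M)
          \<longrightarrow> norm (u (\<lambda>y. m y * \<phi> y)) \<le> C * M"
    proof (intro exI[of _ "C * K"] exI[of _ N'] ballI allI impI)
      fix \<phi> :: "real^'n \<Rightarrow> complex" and M
      assume p: "\<phi> \<in> Schwartz"
        and H: "\<forall>x k is. k \<le> N' \<and> length is \<le> N' \<longrightarrow> (1 + norm x) ^ k * norm (diffs is \<phi> x) \<le> M"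
      have mp: "(\<lambda>y. m y * \<phi> y) \<in> Schwartz" using p iff by blast
      have "\<forall>x k is. k \<le> N \<and> length is \<le> N \<longrightarrow> (1 + norm x) ^ k * norm (diffs is (\<lambda>y. m y * \<phi> y) x) \<le> K * M"
        using E p H by blast
      then have "norm (u (\<lambda>y. m y * \<phi> y)) \<le> C * (K * M)"
        using u3 mp by blast
      then show "norm (u (\<lambda>y. m y * \<phi> y)) \<le> C * K * M" by (simp add: mult.assoc)
    qed
  qed
qed

lemma tempered_hom:
  fixes u :: "(real^'n::finite \<Rightarrow> complex) \<Rightarrow> complex"
  assumes u: "tempered u"
  shows "hom u"
  unfolding hom_def
proof (intro allI)
  fix c :: complex and \<phi>
  have u1: "\<And>\<phi>. \<phi> \<notin> Schwartz \<Longrightarrow> u \<phi> = 0" using u unfolding tempered_def by blast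
  have u2: "\<And>\<phi> \<psi> a b. \<phi> \<in> Schwartz \<Longrightarrow> \<psi> \<in> Schwartz \<Longrightarrow> u (\<lambda>y. a * \<phi> y + b * \<psi> y) = a * u \<phi> + b * u \<psi>"
    using u unfolding tempered_def by blast
  show "u (\<lambda>y. c * \<phi> y) = c * u \<phi>"
  proof (cases "\<phi> \<in> Schwartz")
    case True
    then show ?thesis using u2[OF True True, of c 0] by simp
  next
    case False
    show ?thesis
    proof (cases "c = 0")
      case True
      have "u (\<lambda>y. 0) = 0"
      proof (cases "(\<lambda>y::real^'n. 0::complex) \<in> Schwartz")
        case True then show ?thesis using u2[OF True True, of 0 0] by simp
      next
        case False then show ?thesis using u1 by blast
      qed
      then show ?thesis using True by simp
    next
      case c: False
      then show ?thesis using False u1 Schwartz_scale_iff[OF c, of \<phi>] by simp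
    qed
  qed
qed

lemma emb_hom: "hom (emb f)"
  unfolding hom_def
proof (intro allI)
  fix c :: complex and \<phi>
  show "emb f (\<lambda>y. c * \<phi> y) = c * emb f \<phi>"
  proof (cases "c = 0")
    case True then show ?thesis by (simp add: emb_def)
  next
    case False
    then show ?thesis unfolding emb_def Schwartz_scale_iff[OF False]
      by (simp add: mult.left_commute[of _ c])
  qed
qed

lemma hom_diff: "hom u \<Longrightarrow> hom w \<Longrightarrow> hom (\<lambda>\<phi>. u \<phi> - w \<phi>)"
  unfolding hom_def by (simp add: right_diff_distrib)

lemma Phi_emb:
  fixes m m' :: "real^'n::finite \<Rightarrow> complex"
  assumes m: "PolC m" and m': "PolC m'" and inv: "\<forall>y. m' y * m y = 1"
  shows "Phi m (emb f) = emb (\<lambda>y. m y * f y)"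
proof -
  have e: "\<And>\<phi> y. f y * (m y * \<phi> y) = m y * f y * \<phi> y" by (simp add: algebra_simps)
  show ?thesis unfolding Phi_def emb_def Schwartz_mult_iff[OF m m' inv] e ..
qed

lemma cnj_mult_unit: "norm (z::complex) = 1 \<Longrightarrow> cnj z * z = 1"
  using complex_norm_square[of z] by (simp add: mult.commute)

lemma stft_Phi:
  fixes A1 A2 :: "real^'n::finite \<Rightarrow> real^'n"
  assumes W: "\<forall>x \<xi>. mag_window A2 x \<xi> = (\<lambda>y. c x * (m y * mag_window A1 x \<xi> y))"
    and c: "\<forall>x. norm (c x) = 1" and w: "hom w"
  shows "mag_stft A1 (Phi m w) = (\<lambda>z. cnj (c (fst z)) * mag_stft A2 w z)"
proof (rule ext)
  fix z :: "(real^'n) \<times> (real^'n)"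
  obtain x \<xi> where z: "z = (x, \<xi>)" by (cases z)
  have "mag_stft A2 w z = c x * mag_stft A1 (Phi m w) z"
    unfolding z mag_stft_def Phi_def using W w unfolding hom_def by simp
  then have "cnj (c (fst z)) * mag_stft A2 w z = (cnj (c x) * c x) * mag_stft A1 (Phi m w) z"
    by (simp add: z mult.assoc)
  then show "mag_stft A1 (Phi m w) z = cnj (c (fst z)) * mag_stft A2 w z"
    using cnj_mult_unit[OF c[rule_format, of x]] by simp
qed

lemma Lp_norm_cong: "(\<And>z. norm (f z) = norm (g z)) \<Longrightarrow> Lp_norm p f = Lp_norm p g"
  unfolding Lp_norm_def by simp

lemma Mnorm_Phi:
  fixes A1 A2 :: "real^'n::finite \<Rightarrow> real^'n"
  assumes W: "\<forall>x \<xi>. mag_window A2 x \<xi> = (\<lambda>y. c x * (m y * mag_window A1 x \<xi> y))"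
    and c: "\<forall>x. norm (c x) = 1" and w: "hom w"
  shows "Mnorm p A1 (Phi m w) = Mnorm p A2 w"
  unfolding Mnorm_def stft_Phi[OF W c w]
  by (rule Lp_norm_cong) (simp add: norm_mult c)

lemma core:
  fixes A1 A2 :: "real^'n::finite \<Rightarrow> real^'n" and m m' c :: "real^'n \<Rightarrow> complex"
  assumes m: "PolC m" and m': "PolC m'" and inv: "\<forall>y. m' y * m y = 1"
    and cc: "continuous_on UNIV c" and c: "\<forall>x. norm (c x) = 1"
    and W: "\<forall>x \<xi>. mag_window A2 x \<xi> = (\<lambda>y. c x * (m y * mag_window A1 x \<xi> y))"
    and u: "u \<in> Mspace p A2"
  shows "Phi m u \<in> Mspace p A1 \<and> Mnorm p A1 (Phi m u) = Mnorm p A2 u"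
proof -
  have tu: "tempered u" and meas: "mag_stft A2 u \<in> borel_measurable lborel" and fin: "Mnorm p A2 u < \<infinity>"
    using u unfolding Mspace_def by (auto split: if_splits)
  have hu: "hom u" using tempered_hom[OF tu] .
  have N: "Mnorm p A1 (Phi m u) = Mnorm p A2 u" by (rule Mnorm_Phi[OF W c hu])
  have T: "tempered (Phi m u)" by (rule tempered_Phi[OF m m' inv tu])
  have cm: "(\<lambda>z::(real^'n) \<times> (real^'n). cnj (c (fst z))) \<in> borel_measurable borel"
    by (intro borel_measurable_continuous_onI continuous_intros continuous_on_compose2[OF cc]) auto
  have M: "mag_stft A1 (Phi m u) \<in> borel_measurable lborel"
    unfolding stft_Phi[OF W c hu]
    using cm meas by (intro borel_measurable_times) auto
  show ?thesis
  proof (cases "p = \<infinity>")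
    case False
    then show ?thesis using T M N fin unfolding Mspace_def by simp
  next
    case True
    obtain f where f: "\<And>n. f n \<in> Schwartz"
      and lim: "((\<lambda>n. Mnorm p A2 (\<lambda>\<phi>. u \<phi> - emb (f n) \<phi>)) \<longlongrightarrow> 0) sequentially"
      using u True unfolding Mspace_def by auto
    define g where "g n = (\<lambda>y. m y * f n y)" for n
    have g: "g n \<in> Schwartz" for n unfolding g_def using Schwartz_mult[OF m f] .
    have e: "Mnorm p A1 (\<lambda>\<phi>. Phi m u \<phi> - emb (g n) \<phi>) = Mnorm p A2 (\<lambda>\<phi>. u \<phi> - emb (f n) \<phi>)" for n
    proof -
      have "(\<lambda>\<phi>. Phi m u \<phi> - emb (g n) \<phi>) = Phi m (\<lambda>\<phi>. u \<phi> - emb (f n) \<phi>)"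
        unfolding g_def Phi_emb[OF m m' inv, symmetric] by (simp add: Phi_def)
      then show ?thesis using Mnorm_Phi[OF W c hom_diff[OF hu emb_hom]] by simp
    qed
    have lim2: "((\<lambda>n. Mnorm p A1 (\<lambda>\<phi>. Phi m u \<phi> - emb (g n) \<phi>)) \<longlongrightarrow> 0) sequentially"
      using lim by (simp only: e)
    have "\<exists>f. (\<forall>n. f n \<in> Schwartz) \<and> ((\<lambda>n. Mnorm p A1 (\<lambda>\<phi>. Phi m u \<phi> - emb (f n) \<phi>)) \<longlongrightarrow> 0) sequentially"
      using g lim2 by blast
    then show ?thesis using T M N fin True unfolding Mspace_def by auto
  qed
qed



lemma smooth_cont: "smooth f \<Longrightarrow> continuous_on S f"
  by (rule differentiable_imp_continuous_on, rule differentiable_at_imp_differentiable_on, erule smooth_diff)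

lemma cont_A:
  fixes B :: "'n::finite \<Rightarrow> 'n \<Rightarrow> real^'n \<Rightarrow> real"
  assumes "magnetic_field B"
  shows "continuous_on UNIV (transversal_gauge B)"
proof -
  have cB: "continuous_on UNIV (B j k)" for j k
    using assms unfolding magnetic_field_def smooth_bdd_def by (blast intro: smooth_cont)
  have ci: "continuous_on UNIV (\<lambda>y. integral {0..1} (\<lambda>s. s * y $ k * B j k (s *\<^sub>R y)))" for j k
  proof -
    have c0: "continuous_on (UNIV \<times> cbox 0 1) (\<lambda>z::(real^'n) \<times> real. snd z *\<^sub>R fst z)"
      by (intro continuous_on_scaleR continuous_on_fst continuous_on_snd continuous_on_id)
    have c3: "continuous_on (UNIV \<times> cbox 0 1) (\<lambda>z::(real^'n) \<times> real. B j k (snd z *\<^sub>R fst z))"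
      using continuous_on_compose[OF c0 continuous_on_subset[OF cB[of j k]]] by (simp add: o_def)
    have c12: "continuous_on (UNIV \<times> cbox 0 1) (\<lambda>z::(real^'n) \<times> real. snd z * fst z $ k)"
      by (intro continuous_on_mult continuous_on_component continuous_on_fst continuous_on_snd continuous_on_id)
    have "continuous_on (UNIV \<times> cbox 0 1) (\<lambda>z::(real^'n) \<times> real. snd z * fst z $ k * B j k (snd z *\<^sub>R fst z))"
      by (rule continuous_on_mult[OF c12 c3])
    then have "continuous_on (UNIV \<times> cbox 0 1) (\<lambda>(y, s::real). s * y $ k * B j k (s *\<^sub>R y))"
      by (simp add: split_beta)
    from integral_continuous_on_param[OF this] show ?thesis by (simp only: box_real(2))
  qed
  show ?thesis unfolding transversal_gauge_def[abs_def]
    by (intro continuous_on_vec_lambda continuous_on_minus continuous_on_sum ci)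
qed

lemma cont_grad:
  assumes "Cinf_pol v"
  shows "continuous_on UNIV (grad v)"
proof -
  have sv: "smooth v" using assms unfolding Cinf_pol_def by auto
  show ?thesis unfolding grad_def[abs_def]
    by (intro continuous_on_vec_lambda smooth_cont smooth_dpart sv)
qed

lemma fd_inner:
  fixes v :: "real^'n::finite \<Rightarrow> real"
  assumes D: "(v has_derivative D) (at z)"
  shows "D h = h \<bullet> grad v z"
proof -
  have lin: "linear D" using has_derivative_bounded_linear[OF D] bounded_linear.linear by blast
  have "D h = D (\<Sum>j\<in>UNIV. h $ j *\<^sub>R axis j 1)"
    using basis_expansion[of h] by (simp add: scalar_mult_eq_scaleR)
  also have "\<dots> = (\<Sum>j\<in>UNIV. h $ j * D (axis j 1))"
    by (simp add: linear_sum[OF lin] linear_scale[OF lin])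
  also have "\<dots> = h \<bullet> grad v z"
    unfolding inner_vec_def grad_def using dpart_has[OF D] by simp
  finally show ?thesis .
qed

lemma phase_rel:
  fixes A :: "real^'n::finite \<Rightarrow> real^'n"
  assumes cA: "continuous_on UNIV A" and v: "Cinf_pol v"
  shows "mag_phase (\<lambda>y. A y + grad v y) y x = mag_phase A y x + v y - v x"
proof -
  define \<gamma> where "\<gamma> s = (1 - s) *\<^sub>R x + s *\<^sub>R y" for s :: real
  have sv: "smooth v" using v unfolding Cinf_pol_def by auto
  have cg: "continuous_on UNIV \<gamma>" unfolding \<gamma>_def[abs_def] by (intro continuous_intros)
  have c1: "continuous_on UNIV (A \<circ> \<gamma>)"
    by (rule continuous_on_compose[OF cg]) (rule continuous_on_subset[OF cA], simp)
  have c2: "continuous_on UNIV (grad v \<circ> \<gamma>)"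
    by (rule continuous_on_compose[OF cg]) (rule continuous_on_subset[OF cont_grad[OF v]], simp)
  have i1: "(\<lambda>s. A (\<gamma> s)) integrable_on {0..1}"
    using integrable_continuous_real[OF continuous_on_subset[OF c1, of "{0..1}"]] by (simp add: o_def)
  have i2: "(\<lambda>s. grad v (\<gamma> s)) integrable_on {0..1}"
    using integrable_continuous_real[OF continuous_on_subset[OF c2, of "{0..1}"]] by (simp add: o_def)
  have I: "integral {0..1} (\<lambda>s. A (\<gamma> s) + grad v (\<gamma> s)) = integral {0..1} (\<lambda>s. A (\<gamma> s)) + integral {0..1} (\<lambda>s. grad v (\<gamma> s))"
    by (rule integral_add[OF i1 i2])
  have L: "(y - x) \<bullet> integral {0..1} (\<lambda>s. grad v (\<gamma> s)) = integral {0..1} (\<lambda>s. (y - x) \<bullet> grad v (\<gamma> s))"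
    using integral_linear[OF i2 bounded_linear_inner_right[of "y - x"]] by (simp add: o_def)
  have ftc: "((\<lambda>s. (y - x) \<bullet> grad v (\<gamma> s)) has_integral (v (\<gamma> 1) - v (\<gamma> 0))) {0..1}"
  proof (rule fundamental_theorem_of_calculus)
    fix s :: real assume "s \<in> {0..1}"
    obtain D where D: "(v has_derivative D) (at (\<gamma> s))"
      using smooth_diff[OF sv] differentiable_def by blast
    have dg: "(\<gamma> has_derivative (\<lambda>t. (- t) *\<^sub>R x + t *\<^sub>R y)) (at s)"
      unfolding \<gamma>_def[abs_def] by (auto intro!: derivative_eq_intros simp: algebra_simps)
    have "((v \<circ> \<gamma>) has_derivative (D \<circ> (\<lambda>t. (- t) *\<^sub>R x + t *\<^sub>R y))) (at s)"
      by (rule diff_chain_at[OF dg D])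
    moreover have "(D \<circ> (\<lambda>t. (- t) *\<^sub>R x + t *\<^sub>R y)) = (\<lambda>t. t *\<^sub>R ((y - x) \<bullet> grad v (\<gamma> s)))"
    proof
      fix t
      have "(- t) *\<^sub>R x + t *\<^sub>R y = t *\<^sub>R (y - x)" by (simp add: algebra_simps)
      then show "(D \<circ> (\<lambda>t. (- t) *\<^sub>R x + t *\<^sub>R y)) t = t *\<^sub>R ((y - x) \<bullet> grad v (\<gamma> s))"
        using fd_inner[OF D, of "t *\<^sub>R (y - x)"] by simp
    qed
    ultimately have "((v \<circ> \<gamma>) has_vector_derivative ((y - x) \<bullet> grad v (\<gamma> s))) (at s)"
      unfolding has_vector_derivative_def by simp
    then show "((\<lambda>s. v (\<gamma> s)) has_vector_derivative ((y - x) \<bullet> grad v (\<gamma> s))) (at s within {0..1})"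
      by (simp add: o_def has_vector_derivative_at_within)
  qed simp
  have "\<gamma> 1 = y" "\<gamma> 0 = x" unfolding \<gamma>_def by simp_all
  then have "(y - x) \<bullet> integral {0..1} (\<lambda>s. grad v (\<gamma> s)) = v y - v x"
    using L ftc by (simp add: integral_unique)
  then show ?thesis
    unfolding mag_phase_def \<gamma>_def[symmetric] I inner_add_right by simp
qed

lemma window_rel:
  fixes A :: "real^'n::finite \<Rightarrow> real^'n"
  assumes cA: "continuous_on UNIV A" and v: "Cinf_pol v"
  shows "mag_window (\<lambda>y. A y + grad v y) x \<xi> = (\<lambda>y. cis (v x) * (cis (- v y) * mag_window A x \<xi> y))"
proof
  fix y
  have "cis (- mag_phase (\<lambda>y. A y + grad v y) y x) = cis (v x) * (cis (- v y) * cis (- mag_phase A y x))"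
    unfolding phase_rel[OF cA v] by (simp add: cis_mult) (simp add: algebra_simps)
  then show "mag_window (\<lambda>y. A y + grad v y) x \<xi> y = cis (v x) * (cis (- v y) * mag_window A x \<xi> y)"
    unfolding mag_window_def by (simp add: mult_ac)
qed



theorem proposition4p3:
  fixes B :: "'n::finite \<Rightarrow> 'n \<Rightarrow> real^'n \<Rightarrow> real"
    and v :: "real^'n \<Rightarrow> real"
    and p :: ennreal
  assumes "CARD('n) \<ge> 2"
    and "1 \<le> p"
    and "magnetic_field B"
    and "Cinf_pol v"
  shows "\<exists>\<Phi>. bij_betw \<Phi> (Mspace p (\<lambda>y. transversal_gauge B y + grad v y))
                          (Mspace p (transversal_gauge B)) \<and>
             (\<forall>u\<in>Mspace p (\<lambda>y. transversal_gauge B y + grad v y).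
              \<forall>w\<in>Mspace p (\<lambda>y. transversal_gauge B y + grad v y). \<forall>a b::complex.
                \<Phi> (\<lambda>\<phi>. a * u \<phi> + b * w \<phi>) = (\<lambda>\<phi>. a * \<Phi> u \<phi> + b * \<Phi> w \<phi>)) \<and>
             (\<forall>u\<in>Mspace p (\<lambda>y. transversal_gauge B y + grad v y).
                Mnorm p (transversal_gauge B) (\<Phi> u) = Mnorm p (\<lambda>y. transversal_gauge B y + grad v y) u)"
proof -
  define A where "A = transversal_gauge B"
  define A' where "A' = (\<lambda>y. A y + grad v y)"
  define m1 where "m1 = (\<lambda>y. cis (- v y))"
  define m2 where "m2 = (\<lambda>y. cis (v y))"
  have v: "Cinf_pol v" by (fact assms(4))
  have sv: "smooth v" using v unfolding Cinf_pol_def by auto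
  have cA: "continuous_on UNIV A" unfolding A_def by (rule cont_A[OF assms(3)])
  have P1: "PolC m1" using PolC_cis[OF v, of "-1"] unfolding m1_def by simp
  have P2: "PolC m2" using PolC_cis[OF v, of "1"] unfolding m2_def by simp
  have i21: "\<forall>y. m2 y * m1 y = 1" unfolding m1_def m2_def by (simp add: cis_mult)
  have i12: "\<forall>y. m1 y * m2 y = 1" unfolding m1_def m2_def by (simp add: cis_mult)
  have cv: "continuous_on UNIV v" by (rule smooth_cont[OF sv])
  have c1: "continuous_on UNIV (\<lambda>x. cis (v x))" by (intro continuous_on_cis cv)
  have c2: "continuous_on UNIV (\<lambda>x. cis (- v x))" by (intro continuous_on_cis continuous_on_minus cv)
  have W1: "\<forall>x \<xi>. mag_window A' x \<xi> = (\<lambda>y. cis (v x) * (m1 y * mag_window A x \<xi> y))"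
    unfolding A'_def m1_def using window_rel[OF cA v] by blast
  have W2: "\<forall>x \<xi>. mag_window A x \<xi> = (\<lambda>y. cis (- v x) * (m2 y * mag_window A' x \<xi> y))"
  proof (intro allI ext)
    fix x \<xi> y
    have "cis (- v x) * (m2 y * mag_window A' x \<xi> y)
        = (cis (- v x) * cis (v x)) * (m2 y * m1 y) * mag_window A x \<xi> y"
      unfolding W1[rule_format] by (simp add: mult_ac)
    also have "\<dots> = mag_window A x \<xi> y" using i21 by (simp add: cis_mult)
    finally show "mag_window A x \<xi> y = cis (- v x) * (m2 y * mag_window A' x \<xi> y)" by simp
  qed
  have core1: "\<And>u. u \<in> Mspace p A' \<Longrightarrow> Phi m1 u \<in> Mspace p A \<and> Mnorm p A (Phi m1 u) = Mnorm p A' u"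
    by (rule core[OF P1 P2 i21 c1 _ W1]) simp_all
  have core2: "\<And>u. u \<in> Mspace p A \<Longrightarrow> Phi m2 u \<in> Mspace p A'"
    using core[OF P2 P1 i12 c2 _ W2] by simp
  have inv1: "Phi m2 (Phi m1 u) = u" for u
    unfolding Phi_def using i12 by (simp add: mult.assoc[symmetric])
  have inv2: "Phi m1 (Phi m2 u) = u" for u
    unfolding Phi_def using i21 by (simp add: mult.assoc[symmetric])
  have "bij_betw (Phi m1) (Mspace p A') (Mspace p A)"
    by (rule bij_betw_byWitness[where f'="Phi m2"]) (use inv1 inv2 core1 core2 in auto)
  moreover have "\<forall>u\<in>Mspace p A'. \<forall>w\<in>Mspace p A'. \<forall>a b::complex.
      Phi m1 (\<lambda>\<phi>. a * u \<phi> + b * w \<phi>) = (\<lambda>\<phi>. a * Phi m1 u \<phi> + b * Phi m1 w \<phi>)"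
    by (simp add: Phi_def)
  moreover have "\<forall>u\<in>Mspace p A'. Mnorm p A (Phi m1 u) = Mnorm p A' u"
    using core1 by blast
  ultimately show ?thesis unfolding A'_def A_def by blast
qed

end
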